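(* Let $G$ be a finitely generated non-nilpotent group and let $N$ be a torsion-free nilpotent normal subgroup of finite index in $G$. Let $p>|G:N|$ be a prime and let $j\ge 1$. Then every subgroup $K$ of $G$ with $G=NK$ and $N\cap K=N^{p^j}$ (a dependent subgroup for $p$) is non-nilpotent.
   Context: For a positive integer $m$, $N^m$ denotes the subgroup of $N$ generated by all $m$-th powers of elements of $N$. For a prime $p>|G:N|$, the subgroups $K_j$ with $G=NK_j$ and $N\cap K_j=N^{p^j}$ (i.e. $K_j/N^{p^j}$ is a complement of $N/N^{p^j}$ in $G/N^{p^j}$) are called the dependent subgroups for $p$. *)

theory Defs
  imports "HOL-Algebra.Algebra"
begin

definition commutator_set :: "('a, 'b) monoid_scheme \<Rightarrow> 'a set \<Rightarrow> 'a set \<Rightarrow> 'a set" where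
  "commutator_set G A B =
     (\<Union>a\<in>A. \<Union>b\<in>B. {a \<otimes>\<^bsub>G\<^esub> b \<otimes>\<^bsub>G\<^esub> inv\<^bsub>G\<^esub> a \<otimes>\<^bsub>G\<^esub> inv\<^bsub>G\<^esub> b})"

fun lower_central :: "('a, 'b) monoid_scheme \<Rightarrow> nat \<Rightarrow> 'a set" where
  "lower_central G 0 = carrier G"
| "lower_central G (Suc n) = generate G (commutator_set G (lower_central G n) (carrier G))"

definition nilpotent_group :: "('a, 'b) monoid_scheme \<Rightarrow> bool" where
  "nilpotent_group G \<longleftrightarrow> (\<exists>c. lower_central G c = {\<one>\<^bsub>G\<^esub>})"

definition finitely_generated :: "('a, 'b) monoid_scheme \<Rightarrow> bool" where
  "finitely_generated G \<longleftrightarrow> (\<exists>S. finite S \<and> S \<subseteq> carrier G \<and> generate G S = carrier G)"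

definition torsion_free_set :: "('a, 'b) monoid_scheme \<Rightarrow> 'a set \<Rightarrow> bool" where
  "torsion_free_set G N \<longleftrightarrow> (\<forall>x\<in>N. \<forall>n::nat. n > 0 \<longrightarrow> x [^]\<^bsub>G\<^esub> n = \<one>\<^bsub>G\<^esub> \<longrightarrow> x = \<one>\<^bsub>G\<^esub>)"

definition power_subgroup :: "('a, 'b) monoid_scheme \<Rightarrow> 'a set \<Rightarrow> nat \<Rightarrow> 'a set" where
  "power_subgroup G N m = generate G {x [^]\<^bsub>G\<^esub> m | x. x \<in> N}"

end

theory Submission
  imports Defs
begin

definition cm :: "('a,'b) monoid_scheme \<Rightarrow> 'a \<Rightarrow> 'a \<Rightarrow> 'a" where
  "cm G x y = x \<otimes>\<^bsub>G\<^esub> y \<otimes>\<^bsub>G\<^esub> inv\<^bsub>G\<^esub> x \<otimes>\<^bsub>G\<^esub> inv\<^bsub>G\<^esub> y"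

fun uc :: "('a,'b) monoid_scheme \<Rightarrow> 'a set \<Rightarrow> 'a set \<Rightarrow> nat \<Rightarrow> 'a set" where
  "uc G S B 0 = B"
| "uc G S B (Suc k) = {x \<in> S. \<forall>y\<in>S. cm G x y \<in> uc G S B k}"

context group begin

lemma canc1 [simp]: "x \<in> carrier G \<Longrightarrow> y \<in> carrier G \<Longrightarrow> x \<otimes> (inv x \<otimes> y) = y"
  by (simp add: m_assoc[symmetric])
lemma canc2 [simp]: "x \<in> carrier G \<Longrightarrow> y \<in> carrier G \<Longrightarrow> inv x \<otimes> (x \<otimes> y) = y"
  by (simp add: m_assoc[symmetric])

lemma cm_closed [simp]: "x \<in> carrier G \<Longrightarrow> y \<in> carrier G \<Longrightarrow> cm G x y \<in> carrier G"
  by (simp add: cm_def)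

lemma cm_mult: "x1 \<in> carrier G \<Longrightarrow> x2 \<in> carrier G \<Longrightarrow> y \<in> carrier G \<Longrightarrow>
  cm G (x1 \<otimes> x2) y = x1 \<otimes> cm G x2 y \<otimes> inv x1 \<otimes> cm G x1 y"
  by (simp add: cm_def m_assoc inv_mult_group)

lemma cm_inv: "x \<in> carrier G \<Longrightarrow> y \<in> carrier G \<Longrightarrow>
  cm G (inv x) y = inv x \<otimes> inv (cm G x y) \<otimes> x"
  by (simp add: cm_def m_assoc inv_mult_group)

lemma cm_conj: "g \<in> carrier G \<Longrightarrow> x \<in> carrier G \<Longrightarrow> y \<in> carrier G \<Longrightarrow>
  cm G (g \<otimes> x \<otimes> inv g) y = g \<otimes> cm G x (inv g \<otimes> y \<otimes> g) \<otimes> inv g"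
  by (simp add: cm_def m_assoc inv_mult_group)

lemma cm_one [simp]: "y \<in> carrier G \<Longrightarrow> cm G \<one> y = \<one>"
  by (simp add: cm_def m_assoc)

lemma cm_swap: "x \<in> carrier G \<Longrightarrow> y \<in> carrier G \<Longrightarrow> inv (cm G x y) = cm G y x"
  by (simp add: cm_def m_assoc inv_mult_group)

lemma cm_split: "x \<in> carrier G \<Longrightarrow> n \<in> carrier G \<Longrightarrow> k \<in> carrier G \<Longrightarrow>
  cm G x (n \<otimes> k) = cm G x n \<otimes> (n \<otimes> cm G x k \<otimes> inv n)"
  by (simp add: cm_def m_assoc inv_mult_group)

lemma conj_cm: "n \<in> carrier G \<Longrightarrow> a \<in> carrier G \<Longrightarrow> n \<otimes> a \<otimes> inv n = cm G n a \<otimes> a"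
  by (simp add: cm_def m_assoc inv_mult_group)

lemma carrier_normal: "carrier G \<lhd> G"
  using normal_inv_iff subgroup_self by auto

lemma uc_step_normal:
  assumes S: "S \<lhd> G" and U: "U \<lhd> G" "U \<subseteq> S"
  shows "{x \<in> S. \<forall>y\<in>S. cm G x y \<in> U} \<lhd> G"
proof -
  have Ssub: "subgroup S G" using S normal_imp_subgroup by blast
  have Usub: "subgroup U G" using U normal_imp_subgroup by blast
  have SC: "S \<subseteq> carrier G" using Ssub subgroup.subset by blast
  have UC: "U \<subseteq> carrier G" using Usub subgroup.subset by blast
  have Uc: "\<And>g u. g \<in> carrier G \<Longrightarrow> u \<in> U \<Longrightarrow> g \<otimes> u \<otimes> inv g \<in> U"
    using U normal_inv_iff by blast
  have Sc: "\<And>g u. g \<in> carrier G \<Longrightarrow> u \<in> S \<Longrightarrow> g \<otimes> u \<otimes> inv g \<in> S"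
    using S normal_inv_iff by blast
  let ?V = "{x \<in> S. \<forall>y\<in>S. cm G x y \<in> U}"
  have sg: "subgroup ?V G"
  proof (rule subgroupI)
    show "?V \<subseteq> carrier G" using SC by blast
    show "?V \<noteq> {}"
      using SC subgroup.one_closed[OF Usub] subgroup.one_closed[OF Ssub] by (auto intro!: exI[of _ \<one>])
  next
    fix a assume a: "a \<in> ?V"
    hence aC: "a \<in> carrier G" using SC by blast
    show "inv a \<in> ?V"
    proof (intro CollectI conjI ballI)
      show "inv a \<in> S" using a subgroup.m_inv_closed[OF Ssub] by blast
      fix y assume y: "y \<in> S"
      hence yC: "y \<in> carrier G" using SC by blast
      have "cm G (inv a) y = inv a \<otimes> inv (cm G a y) \<otimes> inv (inv a)"
        using cm_inv aC yC by simp
      also have "\<dots> \<in> U" using Uc[of "inv a" "inv (cm G a y)"] a y aC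
          subgroup.m_inv_closed[OF Usub] by blast
      finally show "cm G (inv a) y \<in> U" .
    qed
  next
    fix a b assume a: "a \<in> ?V" and b: "b \<in> ?V"
    hence aC: "a \<in> carrier G" and bC: "b \<in> carrier G" using SC by blast+
    show "a \<otimes> b \<in> ?V"
    proof (intro CollectI conjI ballI)
      show "a \<otimes> b \<in> S" using a b subgroup.m_closed[OF Ssub] by blast
      fix y assume y: "y \<in> S"
      hence yC: "y \<in> carrier G" using SC by blast
      have "cm G (a \<otimes> b) y = a \<otimes> cm G b y \<otimes> inv a \<otimes> cm G a y"
        using cm_mult aC bC yC by simp
      also have "\<dots> \<in> U" using Uc[of a "cm G b y"] a b y aC
          subgroup.m_closed[OF Usub] by blast
      finally show "cm G (a \<otimes> b) y \<in> U" .
    qed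
  qed
  show ?thesis unfolding normal_inv_iff
  proof (intro conjI sg ballI)
    fix g x assume g: "g \<in> carrier G" and x: "x \<in> ?V"
    hence xC: "x \<in> carrier G" using SC by blast
    show "g \<otimes> x \<otimes> inv g \<in> ?V"
    proof (intro CollectI conjI ballI)
      show "g \<otimes> x \<otimes> inv g \<in> S" using Sc g x by blast
      fix y assume y: "y \<in> S"
      hence yC: "y \<in> carrier G" using SC by blast
      have yy: "inv g \<otimes> y \<otimes> inv (inv g) \<in> S" using Sc[of "inv g" y] g y by blast
      have "cm G (g \<otimes> x \<otimes> inv g) y = g \<otimes> cm G x (inv g \<otimes> y \<otimes> g) \<otimes> inv g"
        using cm_conj g xC yC by simp
      also have "\<dots> \<in> U" using Uc g x yy by simp
      finally show "cm G (g \<otimes> x \<otimes> inv g) y \<in> U" .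
    qed
  qed
qed

lemma uc_normal:
  assumes S: "S \<lhd> G" and B: "B \<lhd> G" "B \<subseteq> S"
  shows "uc G S B k \<lhd> G \<and> uc G S B k \<subseteq> S"
proof (induction k)
  case 0 then show ?case using B by simp
next
  case (Suc k) then show ?case using uc_step_normal[OF S, of "uc G S B k"] by auto
qed

lemma uc_base:
  assumes S: "S \<lhd> G" and B: "B \<lhd> G" "B \<subseteq> S"
  shows "B \<subseteq> uc G S B k"
proof (induction k)
  case 0 then show ?case by simp
next
  case (Suc k)
  have SC: "S \<subseteq> carrier G" using S normal_imp_subgroup subgroup.subset by blast
  have Bsub: "subgroup B G" using B normal_imp_subgroup by blast
  show ?case
  proof
    fix x assume x: "x \<in> B"
    hence xC: "x \<in> carrier G" using B SC by blast
    have "\<forall>y\<in>S. cm G x y \<in> B"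
    proof
      fix y assume y: "y \<in> S"
      hence yC: "y \<in> carrier G" using SC by blast
      have "cm G x y = x \<otimes> (y \<otimes> inv x \<otimes> inv y)" by (simp add: cm_def m_assoc xC yC)
      moreover have "y \<otimes> inv x \<otimes> inv y \<in> B"
        using B normal_inv_iff yC x subgroup.m_inv_closed[OF Bsub] by blast
      ultimately show "cm G x y \<in> B" using x subgroup.m_closed[OF Bsub] by simp
    qed
    thus "x \<in> uc G S B (Suc k)" using Suc x B by auto
  qed
qed

lemma uc_mono_B:
  assumes "B \<subseteq> B'" shows "uc G S B k \<subseteq> uc G S B' k"
  by (induction k) (use assms in auto)

lemma uc_comp:
  assumes "B \<subseteq> uc G S B' e" shows "uc G S B f \<subseteq> uc G S B' (f + e)"
  by (induction f) (use assms in auto)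

lemma comm_set_mem: "x \<in> A \<Longrightarrow> y \<in> B \<Longrightarrow> cm G x y \<in> commutator_set G A B"
  unfolding commutator_set_def cm_def by blast

lemma lc_bound:
  assumes B: "B \<lhd> G" and d: "carrier G \<subseteq> uc G (carrier G) B d"
  shows "lower_central G d \<subseteq> B"
proof -
  have BC: "B \<subseteq> carrier G" using B normal_imp_subgroup subgroup.subset by blast
  have "m \<le> d \<longrightarrow> lower_central G m \<subseteq> uc G (carrier G) B (d - m)" for m
  proof (induction m)
    case 0 then show ?case using d by simp
  next
    case (Suc m)
    show ?case
    proof
      assume m: "Suc m \<le> d"
      hence eq: "d - m = Suc (d - Suc m)" by simp
      have IH: "lower_central G m \<subseteq> uc G (carrier G) B (Suc (d - Suc m))"
        using Suc m eq by simp
      have sg: "subgroup (uc G (carrier G) B (d - Suc m)) G"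
        using uc_normal[OF carrier_normal B BC] normal_imp_subgroup by blast
      have "commutator_set G (lower_central G m) (carrier G) \<subseteq> uc G (carrier G) B (d - Suc m)"
        using IH unfolding commutator_set_def by (auto simp: cm_def)
      thus "lower_central G (Suc m) \<subseteq> uc G (carrier G) B (d - Suc m)"
        using generate_subgroup_incl[OF _ sg] by simp
    qed
  qed
  from this[of d] show ?thesis by simp
qed

lemma comm_set_sub:
  assumes S: "subgroup S G" and A: "A \<subseteq> S"
  shows "commutator_set (G\<lparr>carrier := S\<rparr>) A S = (\<Union>x\<in>A. \<Union>y\<in>S. {cm G x y})"
proof -
  have e: "\<And>x y. x \<in> A \<Longrightarrow> y \<in> S \<Longrightarrow>
    x \<otimes>\<^bsub>G\<lparr>carrier := S\<rparr>\<^esub> y \<otimes>\<^bsub>G\<lparr>carrier := S\<rparr>\<^esub> inv\<^bsub>G\<lparr>carrier := S\<rparr>\<^esub> x \<otimes>\<^bsub>G\<lparr>carrier := S\<rparr>\<^esub> inv\<^bsub>G\<lparr>carrier := S\<rparr>\<^esub> y = cm G x y"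
    using A m_inv_consistent[OF S] by (auto simp: cm_def)
  show ?thesis unfolding commutator_set_def
    by (intro SUP_cong refl) (use e in auto)
qed

lemma lc_sub_carrier:
  assumes S: "subgroup S G"
  shows "lower_central (G\<lparr>carrier := S\<rparr>) k \<subseteq> S"
proof (induction k)
  case 0 then show ?case by simp
next
  case (Suc k)
  have grp: "group (G\<lparr>carrier := S\<rparr>)" using S subgroup.subgroup_is_group is_group by blast
  have SC: "S \<subseteq> carrier G" using S subgroup.subset by blast
  have "commutator_set (G\<lparr>carrier := S\<rparr>) (lower_central (G\<lparr>carrier := S\<rparr>) k) S \<subseteq> S"
    using comm_set_sub[OF S Suc] Suc SC subgroup.m_closed[OF S] subgroup.m_inv_closed[OF S]
    unfolding cm_def by auto
  then show ?case using group.generate_in_carrier[OF grp] by auto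
qed

lemma L1:
  assumes S: "subgroup S G" and nil: "nilpotent_group (G\<lparr>carrier := S\<rparr>)"
  shows "\<exists>c. S \<subseteq> uc G S {\<one>} c"
proof -
  let ?H = "G\<lparr>carrier := S\<rparr>"
  obtain c where c: "lower_central ?H c = {\<one>}" using nil unfolding nilpotent_group_def by auto
  have "i \<le> c \<longrightarrow> lower_central ?H (c - i) \<subseteq> uc G S {\<one>} i" for i
  proof (induction i)
    case 0 then show ?case using c by simp
  next
    case (Suc i)
    show ?case
    proof
      assume i: "Suc i \<le> c"
      hence eq: "c - i = Suc (c - Suc i)" by simp
      have IH: "lower_central ?H (Suc (c - Suc i)) \<subseteq> uc G S {\<one>} i" using Suc i eq by simp
      show "lower_central ?H (c - Suc i) \<subseteq> uc G S {\<one>} (Suc i)"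
      proof
        fix x assume x: "x \<in> lower_central ?H (c - Suc i)"
        have xS: "x \<in> S" using x lc_sub_carrier[OF S] by blast
        have "\<forall>y\<in>S. cm G x y \<in> uc G S {\<one>} i"
        proof
          fix y assume y: "y \<in> S"
          have "cm G x y \<in> commutator_set ?H (lower_central ?H (c - Suc i)) S"
            using comm_set_sub[OF S lc_sub_carrier[OF S]] x y by blast
          hence "cm G x y \<in> lower_central ?H (Suc (c - Suc i))"
            by (simp add: generate.incl)
          thus "cm G x y \<in> uc G S {\<one>} i" using IH by blast
        qed
        thus "x \<in> uc G S {\<one>} (Suc i)" using xS by simp
      qed
    qed
  qed
  from this[of c] show ?thesis by auto
qed

lemma sg_pow: "subgroup H G \<Longrightarrow> x \<in> H \<Longrightarrow> x [^] (n::nat) \<in> H"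
  by (induction n) (auto simp: subgroup.one_closed subgroup.m_closed)

lemma cm_normal_mem:
  assumes A: "A \<lhd> G" and x: "x \<in> A" and y: "y \<in> carrier G"
  shows "cm G x y \<in> A"
proof -
  have As: "subgroup A G" using A normal_imp_subgroup by blast
  have xC: "x \<in> carrier G" using x As subgroup.subset by blast
  have "cm G x y = x \<otimes> (y \<otimes> inv x \<otimes> inv y)" by (simp add: cm_def m_assoc xC y)
  moreover have "y \<otimes> inv x \<otimes> inv y \<in> A"
    using A normal_inv_iff y x subgroup.m_inv_closed[OF As] by blast
  ultimately show ?thesis using x subgroup.m_closed[OF As] by simp
qed

lemma sub_lemma:
  assumes Z: "subgroup Z G" and a: "a \<in> Z" and ab: "a \<otimes> inv b \<in> Z" and b: "b \<in> carrier G"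
  shows "b \<in> Z"
proof -
  have aC: "a \<in> carrier G" using a Z subgroup.subset by blast
  have "b = inv (a \<otimes> inv b) \<otimes> a" using aC b by (simp add: inv_mult_group m_assoc)
  thus ?thesis using a ab subgroup.m_closed[OF Z] subgroup.m_inv_closed[OF Z] by metis
qed

lemma powcomm:
  assumes Z: "Z \<lhd> G" and x: "x \<in> carrier G" and y: "y \<in> carrier G"
    and h: "\<And>m::nat. cm G x (cm G (x [^] m) y) \<in> Z"
  shows "cm G (x [^] (m::nat)) y \<otimes> inv (cm G x y [^] m) \<in> Z"
proof (induction m)
  case 0
  then show ?case using Z normal_imp_subgroup subgroup.one_closed by (fastforce simp: y)
next
  case (Suc m)
  have Zs: "subgroup Z G" using Z normal_imp_subgroup by blast
  define a where "a = cm G (x [^] m) y"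
  define c where "c = cm G x y"
  define b where "b = c [^] m"
  define z where "z = cm G x a"
  have aC: "a \<in> carrier G" and cC: "c \<in> carrier G" and bC: "b \<in> carrier G" and zC: "z \<in> carrier G"
    using x y by (auto simp: a_def b_def c_def z_def)
  have "cm G (x [^] Suc m) y = cm G (x \<otimes> x [^] m) y" using x nat_pow_Suc2[OF x, of m] by (simp del: nat_pow_Suc)
  also have "\<dots> = x \<otimes> a \<otimes> inv x \<otimes> c" using cm_mult x y by (simp add: a_def c_def)
  also have "x \<otimes> a \<otimes> inv x = z \<otimes> a" using conj_cm x aC by (simp add: z_def)
  finally have e1: "cm G (x [^] Suc m) y = z \<otimes> a \<otimes> c" .
  have e2: "cm G x y [^] Suc m = b \<otimes> c" by (simp add: b_def c_def)
  have "cm G (x [^] Suc m) y \<otimes> inv (cm G x y [^] Suc m) = z \<otimes> (a \<otimes> inv b)"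
    unfolding e1 e2 using aC bC cC zC by (simp add: m_assoc inv_mult_group)
  moreover have "z \<in> Z" using h by (simp add: z_def a_def)
  moreover have "a \<otimes> inv b \<in> Z" using Suc by (simp add: a_def b_def c_def)
  ultimately show ?case using subgroup.m_closed[OF Zs] by simp
qed

end

locale setting = group G for G (structure) +
  fixes N K :: "'a set" and q :: nat
  assumes NG: "N \<lhd> G"
    and tf: "torsion_free_set G N"
    and KG: "subgroup K G"
    and NK: "N <#> K = carrier G"
    and qpos: "q > 0"
    and powK: "\<And>x. x \<in> N \<Longrightarrow> x [^] q \<in> K"
begin

abbreviation Z where "Z i \<equiv> uc G N {\<one>} i"

lemma one_normal: "{\<one>} \<lhd> G"
  using normal_inv_iff triv_subgroup by auto

lemma NC: "N \<subseteq> carrier G" using NG normal_imp_subgroup subgroup.subset by blast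
lemma Ns: "subgroup N G" using NG normal_imp_subgroup by blast
lemma KC: "K \<subseteq> carrier G" using KG subgroup.subset by blast

lemma Z_normal: "Z i \<lhd> G" and Z_N: "Z i \<subseteq> N"
  using uc_normal[OF NG one_normal] subgroup.one_closed[OF Ns] by auto

lemma Z_sub: "subgroup (Z i) G" using Z_normal normal_imp_subgroup by blast

lemma Z_C: "Z i \<subseteq> carrier G" using Z_N NC by blast

lemma Zcm: "x \<in> Z (Suc i) \<Longrightarrow> y \<in> N \<Longrightarrow> cm G x y \<in> Z i" by simp

lemma Zcm': "x \<in> Z (Suc i) \<Longrightarrow> y \<in> N \<Longrightarrow> cm G y x \<in> Z i"
proof -
  assume x: "x \<in> Z (Suc i)" and y: "y \<in> N"
  have "x \<in> carrier G" "y \<in> carrier G" using x y Z_C NC by auto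
  hence "cm G y x = inv (cm G x y)" using cm_swap by simp
  thus ?thesis using Zcm[OF x y] subgroup.m_inv_closed[OF Z_sub] by simp
qed

lemma T: "x \<in> Z (Suc i) \<Longrightarrow> x [^] q \<in> Z i \<Longrightarrow> x \<in> Z i"
proof (induction i arbitrary: x)
  case 0
  have "x \<in> N" using 0 by simp
  moreover have "x [^] q = \<one>" using 0 by simp
  ultimately have "x = \<one>" using tf qpos unfolding torsion_free_set_def by blast
  thus ?case by simp
next
  case (Suc i)
  have xN: "x \<in> N" using Suc.prems Z_N by blast
  have xC: "x \<in> carrier G" using xN NC by blast
  have "\<forall>y\<in>N. cm G x y \<in> Z i"
  proof
    fix y assume y: "y \<in> N"
    hence yC: "y \<in> carrier G" using NC by blast
    define w where "w = cm G x y"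
    have wZ: "w \<in> Z (Suc i)" using Suc.prems(1) y by (simp add: w_def)
    have h: "cm G x (cm G (x [^] m) y) \<in> Z i" for m :: nat
    proof -
      have "x [^] m \<in> Z (Suc (Suc i))" using sg_pow[OF Z_sub Suc.prems(1)] .
      hence "cm G (x [^] m) y \<in> Z (Suc i)" using y Zcm by blast
      thus ?thesis using Zcm' xN by blast
    qed
    have A: "cm G (x [^] q) y \<otimes> inv (w [^] q) \<in> Z i"
      using powcomm[OF Z_normal xC yC h] by (simp add: w_def)
    have B: "cm G (x [^] q) y \<in> Z i" using Zcm[OF Suc.prems(2) y] .
    have "w [^] q \<in> Z i" using sub_lemma[OF Z_sub B A] wZ Z_C[of "Suc i"] by blast
    thus "cm G x y \<in> Z i" using Suc.IH[OF wZ] by (simp add: w_def)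
  qed
  thus ?case using xN by simp
qed

lemma decomp: "g \<in> carrier G \<Longrightarrow> \<exists>n\<in>N. \<exists>k\<in>K. g = n \<otimes> k"
  using NK unfolding set_mult_def by blast

lemma U_K: "uc G K {\<one>} d \<subseteq> K"
  by (cases d) (auto simp: subgroup.one_closed[OF KG])

lemma KEY:
  "x \<in> Z (Suc i) \<Longrightarrow> u \<in> uc G K {\<one>} d \<Longrightarrow> x [^] q \<otimes> inv u \<in> Z i
   \<Longrightarrow> x \<in> uc G (carrier G) (Z i) d"
proof (induction d arbitrary: x u)
  case 0
  have "x \<in> carrier G" using 0 Z_C by blast
  hence "x [^] q \<in> Z i" using 0 by simp
  thus ?case using T 0 by simp
next
  case (Suc d)
  have xN: "x \<in> N" using Suc.prems Z_N by blast
  have xC: "x \<in> carrier G" using xN NC by blast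
  have uK: "u \<in> K" using Suc.prems(2) by simp
  have uC: "u \<in> carrier G" using uK KC by blast
  have Cs: "subgroup (uc G (carrier G) (Z i) d) G"
    using uc_normal[OF carrier_normal Z_normal Z_C] normal_imp_subgroup by blast
  have ZinC: "Z i \<subseteq> uc G (carrier G) (Z i) d" using uc_base[OF carrier_normal Z_normal Z_C] .
  have "\<forall>g\<in>carrier G. cm G x g \<in> uc G (carrier G) (Z i) d"
  proof
    fix g assume g: "g \<in> carrier G"
    obtain n k where n: "n \<in> N" and k: "k \<in> K" and gnk: "g = n \<otimes> k" using decomp[OF g] by blast
    have nC: "n \<in> carrier G" using n NC by blast
    have kC: "k \<in> carrier G" using k KC by blast
    define y where "y = cm G x k"
    have yZ: "y \<in> Z (Suc i)" using cm_normal_mem[OF Z_normal Suc.prems(1) kC] by (simp add: y_def)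
    have yC: "y \<in> carrier G" using yZ Z_C by blast
    define u' where "u' = cm G u k"
    have u'U: "u' \<in> uc G K {\<one>} d" using Suc.prems(2) k by (simp add: u'_def)
    have u'C: "u' \<in> carrier G" using uC kC by (simp add: u'_def)
    have h: "cm G x (cm G (x [^] m) k) \<in> Z i" for m :: nat
    proof -
      have "x [^] m \<in> Z (Suc i)" using sg_pow[OF Z_sub Suc.prems(1)] .
      hence "cm G (x [^] m) k \<in> Z (Suc i)" using cm_normal_mem[OF Z_normal _ kC] by blast
      thus ?thesis using Zcm' xN by blast
    qed
    have A: "cm G (x [^] q) k \<otimes> inv (y [^] q) \<in> Z i"
      using powcomm[OF Z_normal xC kC h] by (simp add: y_def)
    define z where "z = x [^] q \<otimes> inv u"
    have zZ: "z \<in> Z i" using Suc.prems(3) by (simp add: z_def)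
    have zC: "z \<in> carrier G" using zZ Z_C by blast
    have xq: "x [^] q = z \<otimes> u" using xC uC by (simp add: z_def m_assoc)
    define c where "c = cm G u k"
    have cC: "c \<in> carrier G" using uC kC by (simp add: c_def)
    have "cm G (x [^] q) k \<otimes> inv u' = z \<otimes> c \<otimes> inv z \<otimes> cm G z k \<otimes> inv c"
      unfolding xq using cm_mult[OF zC uC kC] by (simp add: c_def u'_def)
    also have "\<dots> = z \<otimes> (c \<otimes> (inv z \<otimes> cm G z k) \<otimes> inv c)"
      using zC cC kC by (simp add: m_assoc)
    also have "\<dots> \<in> Z i"
    proof -
      have "inv z \<otimes> cm G z k \<in> Z i"
        using zZ cm_normal_mem[OF Z_normal zZ kC] subgroup.m_closed[OF Z_sub] subgroup.m_inv_closed[OF Z_sub] by blast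
      hence "c \<otimes> (inv z \<otimes> cm G z k) \<otimes> inv c \<in> Z i" using Z_normal normal_inv_iff cC by blast
      thus ?thesis using zZ subgroup.m_closed[OF Z_sub] by blast
    qed
    finally have B: "cm G (x [^] q) k \<otimes> inv u' \<in> Z i" .
    have "y [^] q \<otimes> inv u' = inv (cm G (x [^] q) k \<otimes> inv (y [^] q)) \<otimes> (cm G (x [^] q) k \<otimes> inv u')"
      using xC kC yC u'C by (simp add: m_assoc inv_mult_group)
    hence "y [^] q \<otimes> inv u' \<in> Z i" using A B subgroup.m_closed[OF Z_sub] subgroup.m_inv_closed[OF Z_sub] by metis
    hence yin: "y \<in> uc G (carrier G) (Z i) d" using Suc.IH[OF yZ u'U] by blast
    have "cm G x g = cm G x n \<otimes> (cm G n y \<otimes> y)"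
      using cm_split[OF xC nC kC] conj_cm[OF nC yC] by (simp add: gnk y_def)
    moreover have "cm G x n \<in> Z i" using Zcm[OF Suc.prems(1) n] .
    moreover have "cm G n y \<in> Z i" using Zcm'[OF yZ n] .
    ultimately show "cm G x g \<in> uc G (carrier G) (Z i) d"
      using yin ZinC subgroup.m_closed[OF Cs] by (metis subsetD)
  qed
  thus ?case using xC by simp
qed

lemma Z_step:
  assumes cK: "K \<subseteq> uc G K {\<one>} c"
  shows "Z (Suc i) \<subseteq> uc G (carrier G) (Z i) c"
proof
  fix x assume x: "x \<in> Z (Suc i)"
  have xN: "x \<in> N" using x Z_N by blast
  have "x [^] q \<in> K" using powK[OF xN] .
  hence u: "x [^] q \<in> uc G K {\<one>} c" using cK by blast
  have "x [^] q \<otimes> inv (x [^] q) \<in> Z i"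
    using xN NC subgroup.one_closed[OF Z_sub] by (metis nat_pow_closed r_inv subsetD)
  thus "x \<in> uc G (carrier G) (Z i) c" using KEY[OF x u] by blast
qed

lemma U_C: "uc G K {\<one>} d \<subseteq> uc G (carrier G) N d"
proof (induction d)
  case 0 then show ?case using subgroup.one_closed[OF Ns] by simp
next
  case (Suc d)
  have Cs: "subgroup (uc G (carrier G) N d) G"
    using uc_normal[OF carrier_normal NG NC] normal_imp_subgroup by blast
  have NinC: "N \<subseteq> uc G (carrier G) N d" using uc_base[OF carrier_normal NG NC] .
  show ?case
  proof
    fix x assume x: "x \<in> uc G K {\<one>} (Suc d)"
    hence xK: "x \<in> K" by simp
    hence xC: "x \<in> carrier G" using KC by blast
    have "\<forall>g\<in>carrier G. cm G x g \<in> uc G (carrier G) N d"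
    proof
      fix g assume g: "g \<in> carrier G"
      obtain n k where n: "n \<in> N" and k: "k \<in> K" and gnk: "g = n \<otimes> k" using decomp[OF g] by blast
      have nC: "n \<in> carrier G" using n NC by blast
      have kC: "k \<in> carrier G" using k KC by blast
      define y where "y = cm G x k"
      have yC: "y \<in> carrier G" using xC kC by (simp add: y_def)
      have yin: "y \<in> uc G (carrier G) N d" using x k Suc.IH by (auto simp: y_def)
      have "cm G x g = cm G x n \<otimes> (cm G n y \<otimes> y)"
        using cm_split[OF xC nC kC] conj_cm[OF nC yC] by (simp add: gnk y_def)
      moreover have "cm G x n \<in> N"
      proof -
        have "cm G n x \<in> N" using cm_normal_mem[OF NG n xC] .
        thus ?thesis using cm_swap[OF nC xC] subgroup.m_inv_closed[OF Ns] by metis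
      qed
      moreover have "cm G n y \<in> N" using cm_normal_mem[OF NG n yC] .
      ultimately show "cm G x g \<in> uc G (carrier G) N d"
        using yin NinC subgroup.m_closed[OF Cs] by (metis subsetD)
    qed
    thus "x \<in> uc G (carrier G) N (Suc d)" using xC by simp
  qed
qed

theorem G_nil:
  assumes nilN: "nilpotent_group (G\<lparr>carrier := N\<rparr>)"
    and nilK: "nilpotent_group (G\<lparr>carrier := K\<rparr>)"
  shows "nilpotent_group G"
proof -
  obtain cK where cK: "K \<subseteq> uc G K {\<one>} cK" using L1[OF KG nilK] by blast
  obtain cN where cN: "N \<subseteq> Z cN" using L1[OF Ns nilN] by blast
  have Zb: "\<exists>e. Z i \<subseteq> uc G (carrier G) {\<one>} e" for i
  proof (induction i)
    case 0 show ?case by (rule exI[of _ 0]) simp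
  next
    case (Suc i)
    then obtain e where e: "Z i \<subseteq> uc G (carrier G) {\<one>} e" by blast
    have "Z (Suc i) \<subseteq> uc G (carrier G) (Z i) cK" using Z_step[OF cK] .
    also have "\<dots> \<subseteq> uc G (carrier G) {\<one>} (cK + e)" using uc_comp[OF e] .
    finally show ?case by blast
  qed
  obtain e where e: "N \<subseteq> uc G (carrier G) {\<one>} e" using Zb[of cN] cN by blast
  have Cs: "subgroup (uc G (carrier G) N cK) G"
    using uc_normal[OF carrier_normal NG NC] normal_imp_subgroup by blast
  have "carrier G \<subseteq> uc G (carrier G) N cK"
  proof
    fix g assume g: "g \<in> carrier G"
    obtain n k where n: "n \<in> N" and k: "k \<in> K" and gnk: "g = n \<otimes> k" using decomp[OF g] by blast
    have "n \<in> uc G (carrier G) N cK" using uc_base[OF carrier_normal NG NC] n by blast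
    moreover have "k \<in> uc G (carrier G) N cK" using U_C cK k by blast
    ultimately show "g \<in> uc G (carrier G) N cK" using gnk subgroup.m_closed[OF Cs] by simp
  qed
  also have "\<dots> \<subseteq> uc G (carrier G) {\<one>} (cK + e)" using uc_comp[OF e] .
  finally have "lower_central G (cK + e) \<subseteq> {\<one>}" using lc_bound[OF one_normal] by blast
  moreover have "\<one> \<in> lower_central G m" for m
    by (cases m) (auto intro: generate.one)
  ultimately show ?thesis unfolding nilpotent_group_def by blast
qed

end

theorem mainTheorem9:
  fixes G (structure) and N K :: "'a set" and p j :: nat
  assumes "group G"
    and "finitely_generated G"
    and "\<not> nilpotent_group G"
    and "N \<lhd> G"
    and "torsion_free_set G N"
    and "nilpotent_group (G\<lparr>carrier := N\<rparr>)"
    and "finite (rcosets N)"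
    and "Factorial_Ring.prime p"
    and "p > card (rcosets N)"
    and "j \<ge> 1"
    and "subgroup K G"
    and "N <#> K = carrier G"
    and "N \<inter> K = power_subgroup G N (p ^ j)"
  shows "\<not> nilpotent_group (G\<lparr>carrier := K\<rparr>)"
proof
  assume nilK: "nilpotent_group (G\<lparr>carrier := K\<rparr>)"
  have ppos: "p > 0" using assms(8) prime_gt_0_nat by blast
  have powK: "x [^] (p ^ j) \<in> K" if x: "x \<in> N" for x
  proof -
    have "x [^] (p ^ j) \<in> power_subgroup G N (p ^ j)"
      unfolding power_subgroup_def using x by (auto intro: generate.incl)
    thus ?thesis using assms(13) by blast
  qed
  interpret S: setting G N K "p ^ j"
    by (intro setting.intro setting_axioms.intro) (use assms ppos powK in auto)
  have "nilpotent_group G" using S.G_nil[OF assms(6) nilK] .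
  thus False using assms(3) by blast
qed

end
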